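(* Let $k\ge1$ and $A,B\in SL(k,\mathbb Z)$. If $S_A$ is of diagonal type and $S_B$ is of non-diagonal type, then $S_A$ is not isomorphic to $S_B$.
   Context: For $A\in SL(k,\mathbb Z)$, $S_A$ denotes the semi-direct product $\mathbb Z\ltimes\mathbb Z^k$ associated with the action of $\mathbb Z$ on $\mathbb Z^k$ given by $m\circ x=A^m x$. $S_A$ is said to be of diagonal type if $A$ is diagonalizable over $\mathbb C$ and all its eigenvalues are different from $1$; it is of non-diagonal type if $A$ is not diagonalizable over $\mathbb C$ and all its eigenvalues are different from $1$. *)

theory Defs
  imports "HOL-Analysis.Analysis" "HOL-Algebra.Group"
begin

text \<open>Integer matrices of size k = CARD('n); SL(k,Z) = determinant 1.\<close>
definition in_SL :: "int^'n^'n \<Rightarrow> bool" where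
  "in_SL A \<longleftrightarrow> det A = 1"

definition int_matpow :: "int^'n^'n \<Rightarrow> int \<Rightarrow> int^'n^'n" where
  "int_matpow A m = (if 0 \<le> m then ((\<lambda>M. A ** M) ^^ nat m) (mat 1)
                     else ((\<lambda>M. matrix_inv A ** M) ^^ nat (- m)) (mat 1))"

definition S_grp :: "int^'n^'n \<Rightarrow> (int \<times> (int^'n)) monoid" where
  "S_grp A = \<lparr> carrier = UNIV,
              mult = (\<lambda>(m, x) (m', x'). (m + m', x + int_matpow A m *v x')),
              one = (0, 0) \<rparr>"

definition cmat :: "int^'n^'n \<Rightarrow> complex^'n^'n" where
  "cmat A = map_matrix of_int A"

definition is_eigenvalue_C :: "int^'n^'n \<Rightarrow> complex \<Rightarrow> bool" where
  "is_eigenvalue_C A c \<longleftrightarrow> (\<exists>v::complex^'n. v \<noteq> 0 \<and> cmat A *v v = c *s v)"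

definition diagonalizable_C :: "int^'n^'n \<Rightarrow> bool" where
  "diagonalizable_C A \<longleftrightarrow> (\<exists>P D::complex^'n^'n. invertible P \<and>
      (\<forall>i j. i \<noteq> j \<longrightarrow> D $ i $ j = 0) \<and> cmat A = P ** D ** matrix_inv P)"

definition diagonal_type :: "int^'n^'n \<Rightarrow> bool" where
  "diagonal_type A \<longleftrightarrow> diagonalizable_C A \<and> (\<forall>c. is_eigenvalue_C A c \<longrightarrow> c \<noteq> 1)"

definition non_diagonal_type :: "int^'n^'n \<Rightarrow> bool" where
  "non_diagonal_type A \<longleftrightarrow> \<not> diagonalizable_C A \<and> (\<forall>c. is_eigenvalue_C A c \<longrightarrow> c \<noteq> 1)"

end

theory Submission
  imports Defs
begin

definition cvec :: "int^'n \<Rightarrow> complex^'n" where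
  "cvec v = (\<chi> i. of_int (v$i))"

lemma cmat_mult: "cmat (M ** N) = cmat M ** cmat N"
  by (simp add: cmat_def map_matrix_def matrix_matrix_mult_def vec_eq_iff of_int_sum)

lemma cmat_mv: "cmat M *v cvec v = cvec (M *v v)"
  by (simp add: cmat_def cvec_def map_matrix_def matrix_vector_mult_def vec_eq_iff of_int_sum)

lemma cmat_one: "cmat (mat 1) = mat 1"
  by (simp add: cmat_def map_matrix_def mat_def vec_eq_iff)

lemma cmat_inj: "cmat M = cmat N \<Longrightarrow> M = N"
  by (simp add: cmat_def map_matrix_def vec_eq_iff)

lemma cvec_inj: "cvec v = cvec w \<Longrightarrow> v = w"
  by (simp add: cvec_def vec_eq_iff)

lemma cvec_0: "cvec 0 = 0"
  by (simp add: cvec_def vec_eq_iff)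

lemma cmat_transpose: "cmat (transpose M) = transpose (cmat M)"
  by (simp add: cmat_def map_matrix_def transpose_def vec_eq_iff)

lemma cdet: "det (cmat M) = of_int (det M)"
  by (simp add: det_def cmat_def map_matrix_def of_int_sum of_int_prod)

lemma matrix_inv_prop:
  assumes "invertible (M::'a::semiring_1^'n^'n)"
  shows "M ** matrix_inv M = mat 1 \<and> matrix_inv M ** M = mat 1"
  using assms unfolding invertible_def matrix_inv_def by (rule someI_ex)

lemma int_inv:
  fixes M :: "int^'n^'n"
  assumes d: "det M = 1"
  shows "M ** matrix_inv M = mat 1"
proof -
  define z where "z j = (\<chi> k. det (\<chi> i l. if l = k then axis j (1::int) $ i else M$i$l))" for j
  have dc: "det (cmat M) = 1" using d by (simp add: cdet)
  have zj: "M *v z j = axis j 1" for j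
  proof -
    have "cmat M *v cvec (z j) = cvec (axis j 1)"
    proof (subst cramer[OF _])
      show "det (cmat M) \<noteq> 0" using dc by simp
      have eqk: "cmat (\<chi> i l. if l = k then axis j (1::int) $ i else M$i$l)
          = (\<chi> i l. if l = k then cvec (axis j 1) $ i else cmat M$i$l)" for k
        by (simp add: cmat_def cvec_def map_matrix_def vec_eq_iff)
      have "of_int (det (\<chi> i l. if l = k then axis j (1::int) $ i else M$i$l))
          = det (\<chi> i l. if l = k then cvec (axis j 1) $ i else cmat M$i$l)" for k
        unfolding cdet[symmetric] eqk by (rule refl)
      then show "cvec (z j) = (\<chi> k. det (\<chi> i l. if l = k then cvec (axis j 1) $ i else cmat M$i$l) / det (cmat M))"
        unfolding dc by (simp add: z_def cvec_def vec_eq_iff)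
    qed
    then show ?thesis by (simp add: cmat_mv cvec_inj)
  qed
  define N where "N = (\<chi> i j. z j $ i)"
  have MN: "M ** N = mat 1"
  proof -
    have "(M ** N) $ i $ j = axis j 1 $ i" for i j
      using zj[of j] by (simp add: N_def matrix_matrix_mult_def matrix_vector_mult_def vec_eq_iff)
    then show ?thesis by (simp add: vec_eq_iff mat_def axis_def)
  qed
  then have "cmat M ** cmat N = mat 1" by (simp flip: cmat_mult add: cmat_one)
  then have "cmat N ** cmat M = mat 1" using matrix_left_right_inverse by blast
  then have "N ** M = mat 1" by (metis cmat_inj cmat_mult cmat_one)
  with MN have "invertible M" unfolding invertible_def by blast
  then show ?thesis using matrix_inv_prop by blast
qed

lemma additive_lin:
  fixes f :: "int^'n \<Rightarrow> int"
  assumes add: "\<And>x y. f (x + y) = f x + f y"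
  shows "f x = (\<Sum>j\<in>UNIV. x$j * f (axis j 1))"
proof -
  have f0: "f 0 = 0" using add[of 0 0] by simp
  have fneg: "f (- v) = - f v" for v using add[of v "-v"] f0 by simp
  have fnat: "f (int n *s v) = int n * f v" for n v
  proof (induction n)
    case 0 then show ?case using f0 by simp
  next
    case (Suc n)
    have "int (Suc n) *s v = v + int n *s v" by (simp add: vector_sadd_rdistrib)
    then show ?case using Suc add by (simp add: algebra_simps)
  qed
  have fint: "f (m *s v) = m * f v" for m v
  proof (cases "m \<ge> 0")
    case True then show ?thesis using fnat[of "nat m" v] by simp
  next
    case False
    then have "m *s v = - (int (nat (-m)) *s v)" by (simp add: vec_eq_iff)
    then show ?thesis using fnat[of "nat (-m)" v] fneg False by simp
  qed
  have fsum: "f (sum g S) = (\<Sum>j\<in>S. f (g j))" if "finite S" for g and S :: "'n set"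
    using that by (induction S rule: finite_induct) (simp_all add: f0 add)
  have "f x = f (\<Sum>j\<in>UNIV. x$j *s axis j 1)" by (simp add: basis_expansion)
  also have "\<dots> = (\<Sum>j\<in>UNIV. x$j * f (axis j 1))" by (simp add: fsum fint)
  finally show ?thesis .
qed

lemma no_fix_transpose:
  fixes A :: "int^'n^'n" and c :: "int^'n"
  assumes ne: "\<forall>c. is_eigenvalue_C A c \<longrightarrow> c \<noteq> 1"
    and fx: "transpose A *v c = c"
  shows "c = 0"
proof -
  define M where "M = cmat A - mat 1"
  have "inj ((*v) M)"
  proof (rule injI)
    fix v w assume vw: "M *v v = M *v w"
    have "M *v (v - w) = 0" using vw by (simp add: matrix_vector_mult_diff_distrib)
    then have "cmat A *v (v - w) - (v - w) = 0" by (simp add: M_def matrix_vector_mult_diff_rdistrib)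
    then have e: "cmat A *v (v - w) = 1 *s (v - w)" by simp
    show "v = w"
    proof (rule ccontr)
      assume "v \<noteq> w"
      then have "is_eigenvalue_C A 1" unfolding is_eigenvalue_C_def using e
        by (intro exI[of _ "v - w"]) simp
      with ne show False by blast
    qed
  qed
  then obtain X where "X ** M = mat 1" using matrix_left_invertible_injective by blast
  then have MX: "M ** X = mat 1" using matrix_left_right_inverse by blast
  have "transpose (M ** X) = mat 1" by (simp only: MX transpose_mat)
  then have TX: "transpose X ** transpose M = mat 1" by (simp only: matrix_transpose_mul)
  have tM: "transpose M = cmat (transpose A) - mat 1"
    by (simp add: M_def cmat_def map_matrix_def transpose_def vec_eq_iff mat_def)
  have "transpose M *v cvec c = cmat (transpose A) *v cvec c - cvec c"
    unfolding tM by (simp only: matrix_vector_mult_diff_rdistrib matrix_vector_mul_lid)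
  also have "\<dots> = 0" by (simp only: cmat_mv fx) simp
  finally have z: "transpose M *v cvec c = 0" .
  have "cvec c = (transpose X ** transpose M) *v cvec c" by (simp only: TX matrix_vector_mul_lid)
  also have "\<dots> = 0" by (simp only: matrix_vector_mul_assoc[symmetric] z matrix_vector_mult_0_right)
  finally show ?thesis using cvec_inj cvec_0 by metis
qed


definition dform :: "complex^'n^'n \<Rightarrow> bool" where
  "dform M \<longleftrightarrow> (\<exists>P D::complex^'n^'n. invertible P \<and> (\<forall>i j. i \<noteq> j \<longrightarrow> D $ i $ j = 0) \<and> M = P ** D ** matrix_inv P)"

lemma inv_unique:
  assumes "invertible (Z::complex^'n^'n)" "Z ** W = mat 1"
  shows "matrix_inv Z = W"
proof -
  have "matrix_inv Z = matrix_inv Z ** (Z ** W)" by (simp add: assms)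
  also have "\<dots> = (matrix_inv Z ** Z) ** W" by (simp add: matrix_mul_assoc)
  also have "\<dots> = W" using matrix_inv_prop[OF assms(1)] by simp
  finally show ?thesis .
qed

lemma dform_conj:
  fixes M X Y :: "complex^'n^'n"
  assumes "dform M" and XY: "X ** Y = mat 1"
  shows "dform (X ** M ** Y)"
proof -
  obtain P D :: "complex^'n^'n" where P: "invertible P" and D: "\<forall>i j. i \<noteq> j \<longrightarrow> D $ i $ j = 0"
    and M: "M = P ** D ** matrix_inv P" using assms(1) unfolding dform_def by blast
  have iX: "invertible X" using XY invertible_right_inverse by blast
  have iXP: "invertible (X ** P)" using iX P by (rule invertible_mult)
  have PPi: "P ** matrix_inv P = mat 1" using matrix_inv_prop[OF P] by blast
  have PY: "P ** (matrix_inv P ** Y) = Y" by (metis PPi matrix_mul_assoc matrix_mul_lid)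
  have "(X ** P) ** (matrix_inv P ** Y) = X ** (P ** (matrix_inv P ** Y))" by (simp only: matrix_mul_assoc)
  then have "(X ** P) ** (matrix_inv P ** Y) = mat 1" by (simp only: PY XY)
  then have inv: "matrix_inv (X ** P) = matrix_inv P ** Y" using inv_unique[OF iXP] by blast
  have "X ** M ** Y = (X ** P) ** D ** matrix_inv (X ** P)"
    unfolding inv M by (simp add: matrix_mul_assoc)
  then show ?thesis unfolding dform_def using iXP D by blast
qed

lemma dform_inv:
  fixes M N :: "complex^'n^'n"
  assumes "dform M" and MN: "M ** N = mat 1"
  shows "dform N"
proof -
  obtain P D :: "complex^'n^'n" where P: "invertible P" and D: "\<forall>i j. i \<noteq> j \<longrightarrow> D $ i $ j = 0"
    and M: "M = P ** D ** matrix_inv P" using assms(1) unfolding dform_def by blast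
  define Pi where "Pi = matrix_inv P"
  have PPi: "P ** Pi = mat 1" and PiP: "Pi ** P = mat 1" using matrix_inv_prop[OF P] Pi_def by blast+
  define E where "E = Pi ** N ** P"
  have DM: "D = Pi ** M ** P"
  proof -
    have "Pi ** M ** P = (Pi ** P) ** D ** (Pi ** P)" unfolding M Pi_def[symmetric]
      by (simp add: matrix_mul_assoc)
    then show ?thesis by (simp add: PiP)
  qed
  have DE: "D ** E = mat 1"
  proof -
    have "D ** E = Pi ** (M ** (P ** Pi) ** N) ** P" unfolding DM E_def by (simp add: matrix_mul_assoc)
    also have "\<dots> = Pi ** P" by (simp add: PPi MN)
    finally show ?thesis using PiP by simp
  qed
  have DEij: "(D ** E) $ i $ j = D $ i $ i * E $ i $ j" for i j
  proof -
    have "(D ** E) $ i $ j = (\<Sum>k\<in>UNIV. D $ i $ k * E $ k $ j)" by (simp add: matrix_matrix_mult_def)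
    also have "\<dots> = (\<Sum>k\<in>UNIV. if k = i then D $ i $ i * E $ i $ j else 0)"
      by (rule sum.cong) (auto simp: D)
    finally show ?thesis by simp
  qed
  have Ed: "\<forall>i j. i \<noteq> j \<longrightarrow> E $ i $ j = 0"
  proof (intro allI impI)
    fix i j :: 'n assume ij: "i \<noteq> j"
    have "D $ i $ i * E $ i $ i = 1" using DEij[of i i] DE by (simp add: mat_def)
    then have "D $ i $ i \<noteq> 0" by auto
    moreover have "D $ i $ i * E $ i $ j = 0" using DEij[of i j] DE ij by (simp add: mat_def)
    ultimately show "E $ i $ j = 0" by simp
  qed
  have "P ** E ** Pi = (P ** Pi) ** N ** (P ** Pi)" unfolding E_def by (simp add: matrix_mul_assoc)
  then have "P ** E ** Pi = N" by (simp add: PPi)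
  then have "N = P ** E ** matrix_inv P" by (simp add: Pi_def)
  then show ?thesis unfolding dform_def using P Ed by blast
qed

definition mulS :: "int^'n^'n \<Rightarrow> int \<times> (int^'n) \<Rightarrow> int \<times> (int^'n) \<Rightarrow> int \<times> (int^'n)" where
  "mulS A u v = (fst u + fst v, snd u + int_matpow A (fst u) *v snd v)"

lemma S_mult_eq: "u \<otimes>\<^bsub>S_grp A\<^esub> v = mulS A u v"
  by (cases u, cases v) (simp add: S_grp_def mulS_def)

lemma pow0: "int_matpow M 0 = mat 1" by (simp add: int_matpow_def)
lemma pow1: "int_matpow M 1 = M" by (simp add: int_matpow_def)
lemma powm1: "int_matpow M (-1) = matrix_inv M" by (simp add: int_matpow_def)

lemma mv_axis: "(A *v axis i 1) $ j = (A $ j $ i :: int)"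
proof -
  have "(A *v axis i 1) $ j = (\<Sum>k\<in>UNIV. A $ j $ k * (if k = i then 1 else 0))"
    by (simp add: matrix_vector_mult_def axis_def)
  also have "\<dots> = (\<Sum>k\<in>UNIV. if k = i then A $ j $ i else 0)"
    by (rule sum.cong) auto
  finally show ?thesis by simp
qed

lemma key1:
  fixes A :: "int^'n^'n" and B :: "int^'n^'n"
  assumes h: "\<And>u v. h (mulS A u v) = mulS B (h u) (h v)"
    and ne: "\<forall>c. is_eigenvalue_C A c \<longrightarrow> c \<noteq> 1"
  shows "fst (h (0, x)) = 0"
proof -
  define f where "f x = fst (h (0, x))" for x
  have add: "f (x + y) = f x + f y" for x y
  proof -
    have "mulS A (0, x) (0, y) = (0, x + y)" by (simp add: mulS_def pow0)
    then show ?thesis using h[of "(0,x)" "(0,y)"] by (simp add: f_def mulS_def)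
  qed
  have fA: "f (A *v x) = f x" for x
  proof -
    have "mulS A (1, 0) (0, x) = mulS A (0, A *v x) (1, 0)" by (simp add: mulS_def pow0 pow1)
    then have "fst (h (mulS A (1, 0) (0, x))) = fst (h (mulS A (0, A *v x) (1, 0)))" by simp
    then show ?thesis unfolding h by (simp add: f_def mulS_def)
  qed
  define c where "c = (\<chi> j. f (axis j 1))"
  have lin: "f x = (\<Sum>j\<in>UNIV. x$j * c$j)" for x
    using additive_lin[of f x, OF add] by (simp add: c_def)
  have "transpose A *v c = c"
  proof (subst vec_eq_iff, intro allI)
    fix i
    have "(transpose A *v c) $ i = (\<Sum>j\<in>UNIV. A $ j $ i * c $ j)"
      by (simp add: matrix_vector_mult_def transpose_def del: transpose_matrix_vector)
    also have "\<dots> = f (A *v axis i 1)" by (simp add: lin mv_axis)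
    also have "\<dots> = f (axis i 1)" by (rule fA)
    also have "\<dots> = c $ i" by (simp add: c_def)
    finally show "(transpose A *v c) $ i = c $ i" .
  qed
  then have "c = 0" using no_fix_transpose ne by blast
  then show ?thesis using lin[of x] by (simp add: f_def)
qed

theorem corollary3p6:
  fixes A B :: "int^'n^'n"
  assumes "in_SL A" and "in_SL B"
    and "diagonal_type A" and "non_diagonal_type B"
  shows "\<not> (S_grp A \<cong> S_grp B)"
proof
  assume "S_grp A \<cong> S_grp B"
  then obtain \<phi> where \<phi>: "\<phi> \<in> iso (S_grp A) (S_grp B)" unfolding is_iso_def by blast
  have hA: "\<phi> (mulS A u v) = mulS B (\<phi> u) (\<phi> v)" for u v
    using \<phi> unfolding iso_def hom_def S_mult_eq by (cases u, cases v) (simp add: S_grp_def)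
  have bij: "bij \<phi>" using \<phi> unfolding iso_def by (simp add: S_grp_def)
  define psi where "psi = inv_into UNIV \<phi>"
  have \<phi>psi: "\<phi> (psi y) = y" for y using bij unfolding psi_def by (simp add: bij_is_surj surj_f_inv_f)
  have psi\<phi>: "psi (\<phi> y) = y" for y using bij unfolding psi_def by (simp add: bij_is_inj)
  have hB: "psi (mulS B u v) = mulS A (psi u) (psi v)" for u v
  proof -
    have "\<phi> (mulS A (psi u) (psi v)) = mulS B u v" by (simp add: hA \<phi>psi)
    then show ?thesis by (metis psi\<phi>)
  qed
  have neA: "\<forall>c. is_eigenvalue_C A c \<longrightarrow> c \<noteq> 1" using assms(3) by (simp add: diagonal_type_def)
  have neB: "\<forall>c. is_eigenvalue_C B c \<longrightarrow> c \<noteq> 1" using assms(4) by (simp add: non_diagonal_type_def)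
  have z1: "fst (\<phi> (0, x)) = 0" for x using key1[OF hA neA] .
  have z2: "fst (psi (0, x)) = 0" for x using key1[OF hB neB] .
  define L where "L x = snd (\<phi> (0, x))" for x
  have \<phi>0: "\<phi> (0, x) = (0, L x)" for x using z1[of x] unfolding L_def by (metis prod.collapse)
  have Ladd: "L (x + y) = L x + L y" for x y
  proof -
    have "mulS A (0, x) (0, y) = (0, x + y)" by (simp add: mulS_def pow0)
    then show ?thesis using hA[of "(0,x)" "(0,y)"] by (simp add: \<phi>0 mulS_def pow0)
  qed
  define P where "P = (\<chi> i j. L (axis j 1) $ i)"
  have LP: "L x = P *v x" for x
  proof (subst vec_eq_iff, intro allI)
    fix i
    have "L x $ i = (\<Sum>j\<in>UNIV. x$j * L (axis j 1) $ i)"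
      using additive_lin[of "\<lambda>x. L x $ i" x] Ladd by simp
    then show "L x $ i = (P *v x) $ i" by (simp add: P_def matrix_vector_mult_def mult.commute)
  qed
  define z where "z y = snd (psi (0, y))" for y
  have Lz: "L (z y) = y" for y
  proof -
    have "psi (0, y) = (0, z y)" using z2[of y] unfolding z_def by (metis prod.collapse)
    then have "\<phi> (0, z y) = (0, y)" by (metis \<phi>psi)
    then show ?thesis by (simp add: \<phi>0)
  qed
  define Q where "Q = (\<chi> i j. z (axis j 1) $ i)"
  have PQ: "P ** Q = mat 1"
  proof -
    have "(P ** Q) $ i $ j = (P *v z (axis j 1)) $ i" for i j
      by (simp add: Q_def matrix_matrix_mult_def matrix_vector_mult_def)
    also have "(P *v z (axis j 1)) $ i = axis j 1 $ i" for i j using Lz LP by metis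
    finally show ?thesis by (simp add: vec_eq_iff mat_def axis_def)
  qed
  obtain e y0 where e: "\<phi> (1, 0) = (e, y0)" by (metis prod.collapse)
  have conj: "int_matpow B e ** P = P ** A"
  proof -
    have "(int_matpow B e ** P) *v x = (P ** A) *v x" for x
    proof -
      have "mulS A (1, 0) (0, x) = mulS A (0, A *v x) (1, 0)" by (simp add: mulS_def pow0 pow1)
      then have "\<phi> (mulS A (1, 0) (0, x)) = \<phi> (mulS A (0, A *v x) (1, 0))" by simp
      then have "y0 + int_matpow B e *v L x = L (A *v x) + y0"
        unfolding hA by (simp add: e \<phi>0 mulS_def pow0)
      then show ?thesis by (simp add: LP matrix_vector_mul_assoc)
    qed
    then show ?thesis using matrix_eq by blast
  qed
  have fm: "fst (\<phi> (m, 0)) = m * e" for m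
  proof (induction m rule: int_induct[where k = 0])
    case base then show ?case using z1[of 0] by simp
  next
    case (step1 i)
    have "mulS A (1, 0) (i, 0) = (i + 1, 0)" by (simp add: mulS_def)
    then have "fst (\<phi> (i + 1, 0)) = fst (\<phi> (mulS A (1, 0) (i, 0)))" by simp
    also have "\<dots> = e + i * e" unfolding hA using step1 by (simp add: mulS_def e)
    finally show ?case by (simp add: algebra_simps)
  next
    case (step2 i)
    have "mulS A (1, 0) (i - 1, 0) = (i, 0)" by (simp add: mulS_def)
    then have "fst (\<phi> (i, 0)) = fst (\<phi> (mulS A (1, 0) (i - 1, 0)))" by simp
    also have "\<dots> = e + fst (\<phi> (i - 1, 0))" unfolding hA by (simp add: mulS_def e)
    finally show ?case using step2 by (simp add: algebra_simps)
  qed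
  have fmx: "fst (\<phi> u) = fst u * e" for u
  proof -
    obtain m x where u: "u = (m, x)" by (cases u)
    have "mulS A (0, x) (m, 0) = (m, x)" by (simp add: mulS_def pow0)
    then have "fst (\<phi> u) = fst (\<phi> (mulS A (0, x) (m, 0)))" by (simp add: u)
    also have "\<dots> = m * e" unfolding hA by (simp add: mulS_def \<phi>0 fm)
    finally show ?thesis by (simp add: u)
  qed
  have "fst (psi (1, 0)) * e = 1" using fmx[of "psi (1,0)"] \<phi>psi by simp
  then have e1: "e = 1 \<or> e = -1" using zmult_eq_1_iff by (metis mult.commute)
  have cPQ: "cmat P ** cmat Q = mat 1" by (metis PQ cmat_mult cmat_one)
  have dA: "dform (cmat A)" using assms(3) by (simp add: diagonal_type_def diagonalizable_C_def dform_def)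
  have dBe: "dform (cmat (int_matpow B e))"
  proof -
    have "cmat (int_matpow B e) = cmat (int_matpow B e) ** (cmat P ** cmat Q)" by (simp add: cPQ)
    also have "\<dots> = cmat ((int_matpow B e ** P) ** Q)" by (simp add: cmat_mult matrix_mul_assoc)
    also have "\<dots> = cmat ((P ** A) ** Q)" by (simp only: conj)
    also have "\<dots> = cmat P ** cmat A ** cmat Q" by (simp add: cmat_mult)
    finally show ?thesis using dform_conj[OF dA cPQ] by simp
  qed
  have dB: "dform (cmat B)"
  proof (cases "e = 1")
    case True then show ?thesis using dBe by (simp add: pow1)
  next
    case False
    then have "e = -1" using e1 by simp
    then have d1: "dform (cmat (matrix_inv B))" using dBe by (simp add: powm1)
    have "B ** matrix_inv B = mat 1" using int_inv assms(2) by (simp add: in_SL_def)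
    then have "cmat B ** cmat (matrix_inv B) = mat 1" by (metis cmat_mult cmat_one)
    then have "cmat (matrix_inv B) ** cmat B = mat 1" using matrix_left_right_inverse by blast
    then show ?thesis using dform_inv[OF d1] by blast
  qed
  then show False using assms(4) by (simp add: non_diagonal_type_def diagonalizable_C_def dform_def)
qed

end
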